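(* Let $\mathcal{S}=\{S_1,\dots,S_N\}\subset\mathbb{R}^Q_{\ge0}$ be a finite set of service vectors and suppose the system is overloaded, $\rho\notin\mathcal{P}$. Let $\theta\in\mathbb{R}^Q_{\ge0}$ with $\sum_q\theta_q=1$ be a fairness criterion. Let $X(t)$ be the workload under the MaxWeight policy with some diagonal positive definite matrix $\Delta$, and let $\bar X(t)$ be the workload under some other scheduling algorithm (choosing a service vector from $\mathcal{S}$ in each slot, with the same queue dynamics), such that $$\lim_{t\to\infty}\frac{X(t)}{t}=\eta,\qquad \lim_{t\to\infty}\frac{\bar X(t)}{t}=\bar\eta,$$ and both achieve the fairness criterion: $\frac{\eta_q}{\sum_k\eta_k}=\frac{\bar\eta_q}{\sum_k\bar\eta_k}=\theta_q$ for all $q$. Then $\eta\le\bar\eta$ (componentwise), i.e. $\eta$ is the minimal scaled workload vector achieving the fairness criterion $\theta$.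
   Context: Model: $Q$ queues, discrete time $t=0,1,2,\dots$. Arrivals $A(t)$ with $0\le A_q(t)\le\bar A_q<\infty$ and $\rho_q=\lim_{t\to\infty}\frac1t\sum_{s=0}^{t-1}A_q(s)\in(0,\infty)$. In slot $t$ a service vector $S(t)\in\mathcal{S}$ is used; departures $D_q(t)=\min\{S_q(t),X_q(t)\}$; $X(t+1)=X(t)+A(t)-D(t)$, $X(0)=0$. MaxWeight with matrix $\Delta$ (diagonal, positive diagonal entries): $S(t)\in\arg\max_{S\in\mathcal{S}}\langle S,\Delta X(t)\rangle$. Stability region $\mathcal{P}=\{r\in\mathbb{R}^Q_{\ge0}: r\le\sum_n\alpha_nS_n\text{ for some }\alpha_n\ge0,\ \sum_n\alpha_n=1\}$. *)

theory Defs
  imports "HOL-Analysis.Analysis"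
begin

definition queue_dynamics :: "(nat \<Rightarrow> 'q \<Rightarrow> real) \<Rightarrow> (nat \<Rightarrow> 'q \<Rightarrow> real) \<Rightarrow> (nat \<Rightarrow> 'q \<Rightarrow> real) \<Rightarrow> bool" where
  "queue_dynamics A S X \<longleftrightarrow>
     X 0 = (\<lambda>q. 0) \<and>
     (\<forall>t q. X (Suc t) q = X t q + A t q - min (S t q) (X t q))"

text \<open>Weighted inner product <S, Delta X> for the diagonal matrix Delta = diag(delta).\<close>
definition weighted_inner :: "('q::finite \<Rightarrow> real) \<Rightarrow> ('q \<Rightarrow> real) \<Rightarrow> ('q \<Rightarrow> real) \<Rightarrow> real" where
  "weighted_inner \<delta> S X = (\<Sum>q\<in>UNIV. S q * (\<delta> q * X q))"

definition maxweight_schedule :: "('q::finite \<Rightarrow> real) set \<Rightarrow> ('q \<Rightarrow> real) \<Rightarrow> (nat \<Rightarrow> 'q \<Rightarrow> real) \<Rightarrow> (nat \<Rightarrow> 'q \<Rightarrow> real) \<Rightarrow> bool" where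
  "maxweight_schedule SS \<delta> S X \<longleftrightarrow>
     (\<forall>t. S t \<in> SS \<and> (\<forall>S'\<in>SS. weighted_inner \<delta> S' (X t) \<le> weighted_inner \<delta> (S t) (X t)))"

definition stability_region :: "('q \<Rightarrow> real) set \<Rightarrow> ('q \<Rightarrow> real) set" where
  "stability_region SS = {r. (\<forall>q. 0 \<le> r q) \<and>
     (\<exists>\<alpha>. (\<forall>s\<in>SS. 0 \<le> \<alpha> s) \<and> (\<Sum>s\<in>SS. \<alpha> s) = 1 \<and>
          (\<forall>q. r q \<le> (\<Sum>s\<in>SS. \<alpha> s * s q)))}"

end

theory Submission imports Defs begin

lemma limit_incr:
  fixes f :: "nat \<Rightarrow> real"
  assumes lim: "(\<lambda>t. f t / real t) \<longlonglongrightarrow> L"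
    and inc: "\<And>e. e > 0 \<Longrightarrow> eventually (\<lambda>t. f (Suc t) - f t \<le> e) sequentially"
  shows "L \<le> 0"
proof (rule field_le_epsilon)
  fix e :: real assume e: "0 < e"
  obtain T where T: "\<And>t. t \<ge> T \<Longrightarrow> f (Suc t) - f t \<le> e"
    using inc[OF e] unfolding eventually_sequentially by blast
  have bnd: "f t \<le> f T + e * (real t - real T)" if "t \<ge> T" for t
    using that
  proof (induction t rule: dec_induct)
    case base then show ?case by simp
  next
    case (step n) then show ?case using T[of n] by (simp add: algebra_simps)
  qed
  have "(\<lambda>t. (f T - e * real T) / real t + e) \<longlonglongrightarrow> 0 + e"
    by (intro tendsto_intros)
  moreover have "eventually (\<lambda>t. f t / real t \<le> (f T - e * real T) / real t + e) sequentially"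
    unfolding eventually_sequentially
  proof (intro exI allI impI)
    fix t assume "t \<ge> Suc T"
    then have tp: "real t > 0" and "t \<ge> T" by auto
    then have "f t \<le> (f T - e * real T) + e * real t" using bnd by (simp add: algebra_simps)
    then show "f t / real t \<le> (f T - e * real T) / real t + e"
      using tp by (simp add: field_simps)
  qed
  ultimately have "L \<le> 0 + e" using lim by (intro tendsto_le[OF _ _ lim]) auto
  then show "L \<le> 0 + e" .
qed

lemma X_nonneg:
  assumes "queue_dynamics A S X" "\<forall>t q. 0 \<le> A t q"
  shows "0 \<le> X t q"
proof (induction t)
  case 0 then show ?case using assms by (simp add: queue_dynamics_def)
next
  case (Suc t)
  have "X (Suc t) q = X t q + A t q - min (S t q) (X t q)" using assms by (simp add: queue_dynamics_def)
  also have "\<dots> \<ge> A t q" by simp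
  finally show ?case using assms by (meson order_trans)
qed

theorem theorem2:
  fixes SS :: "('q::finite \<Rightarrow> real) set"
    and A :: "nat \<Rightarrow> 'q \<Rightarrow> real" and Abar \<rho> \<theta> \<delta> \<eta> \<eta>' :: "'q \<Rightarrow> real"
    and S X S' X' :: "nat \<Rightarrow> 'q \<Rightarrow> real"
  assumes SS_fin: "finite SS"
    and SS_nonneg: "\<forall>s\<in>SS. \<forall>q. 0 \<le> s q"
    and A_bounds: "\<forall>t q. 0 \<le> A t q \<and> A t q \<le> Abar q"
    and rho_lim: "\<forall>q. (\<lambda>t. (\<Sum>s<t. A s q) / real t) \<longlonglongrightarrow> \<rho> q"
    and rho_pos: "\<forall>q. 0 < \<rho> q"
    and overload: "\<rho> \<notin> stability_region SS"
    and theta_nonneg: "\<forall>q. 0 \<le> \<theta> q"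
    and theta_sum: "(\<Sum>q\<in>UNIV. \<theta> q) = 1"
    and delta_pos: "\<forall>q. 0 < \<delta> q"
    and MW: "maxweight_schedule SS \<delta> S X"
    and MW_dyn: "queue_dynamics A S X"
    and other_sched: "\<forall>t. S' t \<in> SS"
    and other_dyn: "queue_dynamics A S' X'"
    and X_lim: "\<forall>q. (\<lambda>t. X t q / real t) \<longlonglongrightarrow> \<eta> q"
    and X'_lim: "\<forall>q. (\<lambda>t. X' t q / real t) \<longlonglongrightarrow> \<eta>' q"
    and fair: "\<forall>q. \<eta> q / (\<Sum>k\<in>UNIV. \<eta> k) = \<theta> q"
    and fair': "\<forall>q. \<eta>' q / (\<Sum>k\<in>UNIV. \<eta>' k) = \<theta> q"
  shows "\<forall>q. \<eta> q \<le> \<eta>' q"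
proof -
  define B where "B = (\<Sum>s\<in>SS. \<Sum>q\<in>UNIV. s q)"
  have sB: "0 \<le> s q \<and> s q \<le> B" if "s \<in> SS" for s q
  proof -
    have "s q \<le> (\<Sum>q\<in>UNIV. s q)" using SS_nonneg that by (intro member_le_sum) auto
    also have "\<dots> \<le> B" unfolding B_def using SS_fin SS_nonneg that
      by (intro member_le_sum[of s SS "\<lambda>s. \<Sum>q\<in>UNIV. s q"]) (auto intro: sum_nonneg)
    finally show ?thesis using SS_nonneg that by auto
  qed
  have St: "S t \<in> SS" for t using MW by (simp add: maxweight_schedule_def)
  have Xnn: "0 \<le> X t q" for t q using X_nonneg[OF MW_dyn] A_bounds by auto
  have eta_nn: "0 \<le> \<eta> q" for q
    using X_lim Xnn by (intro LIMSEQ_le_const[of "\<lambda>t. X t q / real t"]) auto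
  define w where "w q = \<delta> q * \<eta> q" for q
  define f where "f t = (\<Sum>q\<in>UNIV. w q * (X t q - X' t q))" for t
  define L where "L = (\<Sum>q\<in>UNIV. w q * (\<eta> q - \<eta>' q))"
  have feq: "f t / real t = (\<Sum>q\<in>UNIV. w q * (X t q / real t - X' t q / real t))" for t
    by (simp add: f_def sum_divide_distrib diff_divide_distrib times_divide_eq_right[symmetric] del: times_divide_eq_right)
  have flim: "(\<lambda>t. f t / real t) \<longlonglongrightarrow> L"
    unfolding feq L_def using X_lim X'_lim by (intro tendsto_intros) auto
  have inc: "eventually (\<lambda>t. f (Suc t) - f t \<le> e) sequentially" if e: "e > 0" for e
  proof -
    have ev1: "eventually (\<lambda>t. \<forall>q. 0 < \<eta> q \<longrightarrow> B \<le> X t q) sequentially"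
    proof (rule eventually_all_finite)
      fix q
      show "eventually (\<lambda>t. 0 < \<eta> q \<longrightarrow> B \<le> X t q) sequentially"
      proof (cases "0 < \<eta> q")
        case True
        have "filterlim (\<lambda>t. X t q / real t * real t) at_top sequentially"
          using X_lim True filterlim_real_sequentially
          by (intro filterlim_tendsto_pos_mult_at_top) auto
        moreover have "eventually (\<lambda>t. X t q / real t * real t = X t q) sequentially"
          unfolding eventually_sequentially by (intro exI[of _ 1]) auto
        ultimately have "filterlim (\<lambda>t. X t q) at_top sequentially"
          using filterlim_cong by fastforce
        then have "eventually (\<lambda>t. B \<le> X t q) sequentially"
          unfolding filterlim_at_top by blast
        then show ?thesis by (rule eventually_mono) auto
      qed auto
    qed
    define k where "k t = (\<Sum>q\<in>UNIV. B * \<delta> q * \<bar>\<eta> q - X t q / real t\<bar>)" for t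
    have "k \<longlonglongrightarrow> (\<Sum>q\<in>UNIV. B * \<delta> q * \<bar>\<eta> q - \<eta> q\<bar>)"
      unfolding k_def using X_lim by (intro tendsto_intros) auto
    then have "k \<longlonglongrightarrow> 0" by simp
    then have ev2: "eventually (\<lambda>t. k t < e) sequentially" using e by (rule order_tendstoD)
    have ev3: "eventually (\<lambda>t. 0 < t) sequentially"
      unfolding eventually_sequentially by (intro exI[of _ 1]) auto
    show ?thesis using ev1 ev2 ev3
    proof eventually_elim
      case (elim t)
      have tp: "real t > 0" using elim by auto
      have step: "f (Suc t) - f t = (\<Sum>q\<in>UNIV. w q * (min (S' t q) (X' t q) - min (S t q) (X t q)))"
      proof -
        have d1: "X (Suc t) q = X t q + A t q - min (S t q) (X t q)" for q
          using MW_dyn unfolding queue_dynamics_def by blast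
        have d2: "X' (Suc t) q = X' t q + A t q - min (S' t q) (X' t q)" for q
          using other_dyn unfolding queue_dynamics_def by blast
        show ?thesis unfolding f_def d1 d2 sum_subtractf[symmetric]
          by (intro sum.cong) (auto simp: algebra_simps)
      qed
      have t1: "w q * (min (S' t q) (X' t q) - min (S t q) (X t q)) \<le> w q * (S' t q - S t q)" for q
      proof (cases "0 < \<eta> q")
        case True
        then have "min (S t q) (X t q) = S t q" using elim sB[OF St[of t], of q] by auto
        moreover have "0 \<le> w q" using True delta_pos[rule_format, of q] by (simp add: w_def)
        ultimately show ?thesis by (intro mult_left_mono) auto
      next
        case False then have "\<eta> q = 0" using eta_nn[of q] by auto
        then show ?thesis by (simp add: w_def)
      qed
      have mw: "(\<Sum>q\<in>UNIV. S' t q * (\<delta> q * X t q)) \<le> (\<Sum>q\<in>UNIV. S t q * (\<delta> q * X t q))"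
        using MW other_sched unfolding maxweight_schedule_def weighted_inner_def by blast
      have mw2: "(\<Sum>q\<in>UNIV. (S' t q - S t q) * \<delta> q * (X t q / real t)) \<le> 0"
      proof -
        have "(\<Sum>q\<in>UNIV. (S' t q - S t q) * \<delta> q * (X t q / real t))
            = ((\<Sum>q\<in>UNIV. S' t q * (\<delta> q * X t q)) - (\<Sum>q\<in>UNIV. S t q * (\<delta> q * X t q))) / real t"
          unfolding sum_subtractf[symmetric] sum_divide_distrib
          by (intro sum.cong) (auto simp: algebra_simps diff_divide_distrib)
        also have "\<dots> \<le> 0" using mw tp by (simp add: divide_nonpos_pos)
        finally show ?thesis .
      qed
      have t2: "(S' t q - S t q) * \<delta> q * (\<eta> q - X t q / real t) \<le> B * \<delta> q * \<bar>\<eta> q - X t q / real t\<bar>" for q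
      proof -
        have "\<bar>S' t q - S t q\<bar> \<le> B" using sB[OF St[of t], of q] sB[of "S' t" q] other_sched by auto
        then have "\<bar>S' t q - S t q\<bar> * \<delta> q * \<bar>\<eta> q - X t q / real t\<bar> \<le> B * \<delta> q * \<bar>\<eta> q - X t q / real t\<bar>"
          using delta_pos[rule_format, of q] by (intro mult_right_mono) auto
        moreover have "(S' t q - S t q) * \<delta> q * (\<eta> q - X t q / real t) \<le> \<bar>S' t q - S t q\<bar> * \<delta> q * \<bar>\<eta> q - X t q / real t\<bar>"
          using delta_pos[rule_format, of q] by (metis abs_ge_self abs_mult abs_of_pos)
        ultimately show ?thesis by linarith
      qed
      have "f (Suc t) - f t \<le> (\<Sum>q\<in>UNIV. w q * (S' t q - S t q))"
        unfolding step by (intro sum_mono t1)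
      also have "\<dots> = (\<Sum>q\<in>UNIV. (S' t q - S t q) * \<delta> q * (\<eta> q - X t q / real t))
                     + (\<Sum>q\<in>UNIV. (S' t q - S t q) * \<delta> q * (X t q / real t))"
        by (simp add: sum.distrib[symmetric] w_def algebra_simps)
      also have "\<dots> \<le> k t + 0" unfolding k_def
        by (intro add_mono mw2 sum_mono t2)
      also have "\<dots> < e" using elim by simp
      finally show ?case by simp
    qed
  qed
  have L0: "L \<le> 0" by (rule limit_incr[OF flim inc])
  define c where "c = (\<Sum>k\<in>UNIV. \<eta> k)"
  define c' where "c' = (\<Sum>k\<in>UNIV. \<eta>' k)"
  have c0: "c \<noteq> 0"
  proof
    assume "c = 0"
    then have "\<theta> q = 0" for q using fair by (simp add: c_def)
    then show False using theta_sum by simp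
  qed
  have cpos: "c > 0" using c0 eta_nn unfolding c_def by (metis order_less_le sum_nonneg)
  have c'0: "c' \<noteq> 0"
  proof
    assume "c' = 0"
    then have "\<theta> q = 0" for q using fair' by (simp add: c'_def)
    then show False using theta_sum by simp
  qed
  have eta_eq: "\<eta> q = \<theta> q * c" for q using fair c0 unfolding c_def by (metis nonzero_eq_divide_eq)
  have eta'_eq: "\<eta>' q = \<theta> q * c'" for q using fair' c'0 unfolding c'_def by (metis nonzero_eq_divide_eq)
  define P where "P = (\<Sum>q\<in>UNIV. \<delta> q * \<theta> q * \<theta> q)"
  have LP: "L = c * (c - c') * P"
    unfolding L_def P_def w_def eta_eq eta'_eq by (simp add: sum_distrib_left algebra_simps)
  obtain q0 where q0: "\<theta> q0 > 0"
  proof -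
    have "\<exists>q. \<theta> q > 0"
    proof (rule ccontr)
      assume "\<not> ?thesis"
      then have "\<theta> q = 0" for q using theta_nonneg by (meson not_le order_antisym)
      then show False using theta_sum by simp
    qed
    then show ?thesis using that by blast
  qed
  have Ppos: "P > 0"
  proof -
    have "\<delta> q0 * \<theta> q0 * \<theta> q0 > 0" using q0 delta_pos by simp
    also have "\<delta> q0 * \<theta> q0 * \<theta> q0 \<le> P" unfolding P_def
      using delta_pos theta_nonneg by (intro member_le_sum) (auto simp: less_imp_le)
    finally show ?thesis .
  qed
  have "c - c' \<le> 0"
  proof (rule ccontr)
    assume "\<not> c - c' \<le> 0"
    then have "c * (c - c') * P > 0" using cpos Ppos by simp
    then show False using L0 LP by simp
  qed
  then show ?thesis using eta_eq eta'_eq theta_nonneg by (simp add: mult_left_mono)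
qed

end
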